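(* For every set $S\subseteq V$ of vaccinated nodes, the expected total reward equals $$r(S)=\sum_{i\in S}\Big|N_i\setminus \bigcup_{j\in N_i\cap S}N_j\Big|\,\mathbb{P}\{Z_i>\tau\}=\sum_{i\in S}\Big(n_i-\Big|\bigcup_{j\in N_i\cap S}N_j\Big|\Big)\mathbb{P}\{Z_i>\tau\}.$$
   Context: Let $G=(V,E)$ be a finite tree with $|V|=n$, rooted at a node $s$ (the infection source). For a node $i$: $d_i$ is its depth (number of edges on the path from $s$ to $i$); $A_i$ is the set of ancestors of $i$ (strict, including its parent); $N_i$ is the set of descendants of $i$ (strict, not including $i$); $n_i=|N_i|$. Each edge $e$ carries an independent random variable $X_e\sim\mathrm{Exp}(\lambda)$ with $\lambda>0$, and $Z_i=\sum_{e \text{ on the path from } s \text{ to } i}X_e$ is the infection time of $i$ (so $Z_s=0$; $Z_i$ is a sum of $d_i$ i.i.d. $\mathrm{Exp}(\lambda)$ variables). The immunization time $\tau\ge 0$ is a single random variable, common to all vaccinated nodes and independent of $(X_e)_{e\in E}$. For $S\subseteq V$ (the vaccinated set), a node $i\in S$ becomes immune iff $Z_i>\tau$, and an immune node saves all its descendants. The expected total reward is defined as $r(S)=\mathbb{E}\big[\,\big|\bigcup_{i\in S:\,Z_i>\tau}N_i\big|\,\big]$, the expected number of nodes that are descendants of at least one immune vaccinated node. *)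

theory Defs
  imports "HOL-Probability.Probability"
begin

text \<open>The edges are the pairs (par v, v) for v in V - {s}; each such edge is identified
  with its child endpoint v.\<close>
definition is_rooted_tree :: "'a set \<Rightarrow> 'a \<Rightarrow> ('a \<Rightarrow> 'a) \<Rightarrow> bool" where
  "is_rooted_tree V s par \<longleftrightarrow> finite V \<and> s \<in> V \<and> (\<forall>v\<in>V - {s}. par v \<in> V)
     \<and> (\<forall>v\<in>V. \<exists>k. (par ^^ k) v = s)"

definition depth :: "'a \<Rightarrow> ('a \<Rightarrow> 'a) \<Rightarrow> 'a \<Rightarrow> nat" where
  "depth s par i = (LEAST k. (par ^^ k) i = s)"

definition ancestors :: "'a \<Rightarrow> ('a \<Rightarrow> 'a) \<Rightarrow> 'a \<Rightarrow> 'a set" where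
  "ancestors s par i = {(par ^^ k) i | k. 0 < k \<and> k \<le> depth s par i}"

definition descendants :: "'a set \<Rightarrow> 'a \<Rightarrow> ('a \<Rightarrow> 'a) \<Rightarrow> 'a \<Rightarrow> 'a set" where
  "descendants V s par i = {j \<in> V. i \<in> ancestors s par j}"

definition infection_time :: "'a \<Rightarrow> ('a \<Rightarrow> 'a) \<Rightarrow> ('a \<Rightarrow> 'w \<Rightarrow> real) \<Rightarrow> 'a \<Rightarrow> 'w \<Rightarrow> real" where
  "infection_time s par X i \<omega> = (\<Sum>k < depth s par i. X ((par ^^ k) i) \<omega>)"

end

theory Submission
  imports Defs
begin

lemma sum_ind_card: "finite A \<Longrightarrow> (\<Sum>x\<in>A. indicator B x :: real) = real (card (A \<inter> B))"
proof -
  assume f: "finite A"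
  have "real (card (A \<inter> B)) = real (\<Sum>x\<in>A. indicator B x :: nat)" using sum_indicator_eq_card[OF f] by simp
  also have "\<dots> = (\<Sum>x\<in>A. real (indicator B x :: nat))" by (rule of_nat_sum)
  also have "\<dots> = (\<Sum>x\<in>A. indicator B x :: real)" by (intro sum.cong refl) (simp add: indicator_def)
  finally show ?thesis by simp
qed

locale rtree =
  fixes V :: "'a set" and s :: 'a and par :: "'a \<Rightarrow> 'a"
  assumes tree: "is_rooted_tree V s par"
begin

abbreviation d where "d \<equiv> depth s par"
abbreviation N where "N \<equiv> descendants V s par"

lemma finV: "finite V" and sV: "s \<in> V" and parV: "v \<in> V - {s} \<Longrightarrow> par v \<in> V"
  and reach: "v \<in> V \<Longrightarrow> \<exists>k. (par ^^ k) v = s"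
  using tree unfolding is_rooted_tree_def by auto

lemma L1: "v \<in> V \<Longrightarrow> (par ^^ d v) v = s"
  unfolding depth_def using reach by (metis (mono_tags, lifting) LeastI_ex)

lemma L2: "v \<in> V \<Longrightarrow> k < d v \<Longrightarrow> (par ^^ k) v \<noteq> s"
  unfolding depth_def using not_less_Least by blast

lemma L3: "v \<in> V \<Longrightarrow> k \<le> d v \<Longrightarrow> (par ^^ k) v \<in> V"
proof (induction k)
  case 0 then show ?case by simp
next
  case (Suc k)
  then have "(par ^^ k) v \<in> V - {s}" using L2[of v k] by auto
  then show ?case using parV by simp
qed

lemma L3': "v \<in> V \<Longrightarrow> k < d v \<Longrightarrow> (par ^^ k) v \<in> V - {s}"
  using L2 L3 by auto

lemma L4: assumes "v \<in> V" "k \<le> d v" shows "d ((par ^^ k) v) = d v - k"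
proof -
  have "(par ^^ (d v - k)) ((par ^^ k) v) = (par ^^ (d v - k + k)) v"
    by (simp add: funpow_add)
  also have "\<dots> = s" using assms L1 by simp
  finally have a: "(par ^^ (d v - k)) ((par ^^ k) v) = s" .
  then have le1: "d ((par ^^ k) v) \<le> d v - k" unfolding depth_def by (rule Least_le)
  have "(par ^^ d ((par ^^ k) v)) ((par ^^ k) v) = s"
    unfolding depth_def using a by (rule LeastI)
  then have "(par ^^ (d ((par ^^ k) v) + k)) v = s" by (simp add: funpow_add)
  then have "d v \<le> d ((par ^^ k) v) + k" unfolding depth_def by (rule Least_le)
  with le1 show ?thesis by simp
qed

lemma L5: "j \<in> N i \<longleftrightarrow> j \<in> V \<and> (\<exists>k. 0 < k \<and> k \<le> d j \<and> (par ^^ k) j = i)"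
  unfolding descendants_def ancestors_def by auto

lemma L6: assumes "j \<in> N i" shows "i \<in> V" "d i < d j"
proof -
  obtain k where k: "j \<in> V" "0 < k" "k \<le> d j" "(par ^^ k) j = i" using assms L5 by blast
  show "i \<in> V" using L3 k by blast
  show "d i < d j" using L4[OF k(1) k(3)] k by simp
qed

lemma L7: assumes "j \<in> N i" "i \<in> N h" shows "j \<in> N h"
proof -
  obtain a where a: "j \<in> V" "0 < a" "a \<le> d j" "(par ^^ a) j = i" using assms(1) L5 by blast
  obtain b where b: "0 < b" "b \<le> d i" "(par ^^ b) i = h" using assms(2) L5 by blast
  have "d i = d j - a" using L4 a by blast
  moreover have "(par ^^ (b + a)) j = h" using a b by (simp add: funpow_add)
  ultimately show ?thesis using a b L5 by (intro L5[THEN iffD2]) (auto intro!: exI[of _ "b+a"])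
qed

lemma L8: assumes "k \<in> N i" "k \<in> N j" "i \<noteq> j" shows "i \<in> N j \<or> j \<in> N i"
proof -
  obtain a where a: "k \<in> V" "0 < a" "a \<le> d k" "(par ^^ a) k = i" using assms(1) L5 by blast
  obtain b where b: "0 < b" "b \<le> d k" "(par ^^ b) k = j" using assms(2) L5 by blast
  have gen: "y \<in> N x" if "0 < p" "p \<le> d k" "0 < q" "q \<le> d k" "(par ^^ p) k = y"
     "(par ^^ q) k = x" "p < q" for p q x y
  proof -
    have "(par ^^ (q - p + p)) k = (par ^^ (q - p)) ((par ^^ p) k)" by (simp only: funpow_add comp_def)
    then have "(par ^^ (q - p)) y = (par ^^ (q - p + p)) k" using that by simp
    then have "(par ^^ (q - p)) y = x" using that by simp
    moreover have "d y = d k - p" using L4 a(1) that by blast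
    moreover have "y \<in> V" using L3 a(1) that by blast
    ultimately show ?thesis using that by (intro L5[THEN iffD2]) (auto intro!: exI[of _ "q - p"])
  qed
  have "a \<noteq> b" using a b assms(3) by auto
  then show ?thesis using gen[of a b i j] gen[of b a j i] a b by linarith
qed

lemma NsubV: "N i \<subseteq> V" unfolding descendants_def by auto

lemma finN: "finite (N i)" using finV NsubV finite_subset by blast

definition D where "D S i = N i - (\<Union>j\<in>N i \<inter> S. N j)"

lemma core:
  assumes SV: "S \<subseteq> V" and TS: "T \<subseteq> S"
    and up: "\<And>i j. i \<in> T \<Longrightarrow> j \<in> S \<Longrightarrow> j \<in> N i \<Longrightarrow> j \<in> T"
  shows "card (\<Union>i\<in>T. N i) = (\<Sum>i\<in>S. if i \<in> T then card (D S i) else 0)"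
proof -
  have finS: "finite S" using SV finV finite_subset by blast
  have cov: "(\<Union>i\<in>T. N i) = (\<Union>i\<in>T. D S i)"
  proof
    show "(\<Union>i\<in>T. D S i) \<subseteq> (\<Union>i\<in>T. N i)" unfolding D_def by auto
    show "(\<Union>i\<in>T. N i) \<subseteq> (\<Union>i\<in>T. D S i)"
    proof
      fix k assume "k \<in> (\<Union>i\<in>T. N i)"
      then obtain i where i: "i \<in> T" "k \<in> N i" by blast
      define C where "C = {j\<in>S. k \<in> N j \<and> (j = i \<or> j \<in> N i)}"
      have finC: "finite C" using finS C_def by auto
      have iC: "i \<in> C" using i TS C_def by auto
      define m where "m = Max (d ` C)"
      have "m \<in> d ` C" unfolding m_def using finC iC by (intro Max_in) auto
      then obtain j where j: "j \<in> C" "d j = m" by blast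
      have maxj: "d j' \<le> d j" if "j' \<in> C" for j' using that j finC m_def by simp
      have jT: "j \<in> T" using j(1) up i(1) unfolding C_def by auto
      have "k \<in> D S j"
      proof -
        have "k \<notin> N j'" if "j' \<in> N j \<inter> S" for j'
        proof
          assume kj': "k \<in> N j'"
          have "j' \<in> N i" using that j(1) L7 unfolding C_def by auto
          then have "j' \<in> C" using that kj' C_def by auto
          then have "d j' \<le> d j" by (rule maxj)
          moreover have "d j < d j'" using that L6 by auto
          ultimately show False by simp
        qed
        then show ?thesis using j(1) unfolding D_def C_def by auto
      qed
      then show "k \<in> (\<Union>i\<in>T. D S i)" using jT by blast
    qed
  qed
  have disj: "\<forall>i\<in>T. \<forall>j\<in>T. i \<noteq> j \<longrightarrow> D S i \<inter> D S j = {}"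
  proof (intro ballI impI)
    fix i j assume ij: "i \<in> T" "j \<in> T" "i \<noteq> j"
    show "D S i \<inter> D S j = {}"
    proof (rule ccontr)
      assume "D S i \<inter> D S j \<noteq> {}"
      then obtain k where k: "k \<in> D S i" "k \<in> D S j" by blast
      then have "k \<in> N i" "k \<in> N j" unfolding D_def by auto
      then have "i \<in> N j \<or> j \<in> N i" using L8 ij by blast
      then show False using k ij TS \<open>k \<in> N i\<close> \<open>k \<in> N j\<close> unfolding D_def by blast
    qed
  qed
  have "card (\<Union>i\<in>T. N i) = (\<Sum>i\<in>T. card (D S i))"
    unfolding cov using finS TS disj finN
    by (intro card_UN_disjoint) (auto simp: D_def intro: finite_subset)
  also have "\<dots> = (\<Sum>i\<in>S. if i \<in> T then card (D S i) else 0)"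
    using finS TS by (simp add: sum.If_cases Int_absorb1)
  finally show ?thesis .
qed

lemma Dcard: "real (card (D S i)) = real (card (N i)) - real (card (\<Union>j\<in>N i \<inter> S. N j))"
proof -
  have sub: "(\<Union>j\<in>N i \<inter> S. N j) \<subseteq> N i" using L7 by blast
  then show ?thesis unfolding D_def using finN
    by (simp add: card_Diff_subset card_mono of_nat_diff finite_subset)
qed


lemma Zrec: assumes "j \<in> V - {s}"
  shows "infection_time s par X j \<omega> = X j \<omega> + infection_time s par X (par j) \<omega>"
proof -
  have jV: "j \<in> V" using assms by simp
  have "d j \<noteq> 0" using L1[OF jV] assms by (metis DiffE funpow_0 singletonI)
  moreover have "d (par j) = d j - 1" using L4[OF jV, of 1] \<open>d j \<noteq> 0\<close> by simp
  ultimately have dj: "d j = Suc (d (par j))" by simp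
  show ?thesis unfolding infection_time_def dj sum.lessThan_Suc_shift
    by (simp add: funpow_Suc_right del: funpow.simps)
qed

lemma Zmono: assumes "\<forall>v\<in>V-{s}. 0 \<le> X v \<omega>" "j \<in> V"
  shows "a \<le> d j \<Longrightarrow> infection_time s par X ((par ^^ a) j) \<omega> \<le> infection_time s par X j \<omega>"
proof (induction a)
  case 0 then show ?case by simp
next
  case (Suc a)
  have m: "(par ^^ a) j \<in> V - {s}" using L3' assms(2) Suc by simp
  have "infection_time s par X ((par ^^ Suc a) j) \<omega> \<le> infection_time s par X ((par ^^ a) j) \<omega>"
    using Zrec[OF m, of X \<omega>] assms(1) m by simp
  then show ?case using Suc by simp
qed

lemma Zmeas: assumes "\<And>v. v \<in> V - {s} \<Longrightarrow> X v \<in> borel_measurable M" "i \<in> V"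
  shows "(\<lambda>\<omega>. infection_time s par X i \<omega>) \<in> borel_measurable M"
  unfolding infection_time_def using assms L3'
  by (intro borel_measurable_sum) auto

end

theorem theorem1:
  fixes M :: "'w measure" and V :: "'a set" and s :: 'a and par :: "'a \<Rightarrow> 'a"
    and X :: "'a \<Rightarrow> 'w \<Rightarrow> real" and tau :: "'w \<Rightarrow> real" and lam :: real
    and S :: "'a set"
  assumes "prob_space M"
    and "is_rooted_tree V s par"
    and "0 < lam"
    and "\<And>v. v \<in> V - {s} \<Longrightarrow> distributed M lborel (X v) (exponential_density lam)"
    and "tau \<in> borel_measurable M"
    and "\<And>\<omega>. \<omega> \<in> space M \<Longrightarrow> 0 \<le> tau \<omega>"
    and "prob_space.indep_vars M (\<lambda>_. borel)
           (\<lambda>e. case e of None \<Rightarrow> tau | Some v \<Rightarrow> X v) (insert None (Some ` (V - {s})))"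
    and "S \<subseteq> V"
  shows "(\<integral>\<omega>. real (card (\<Union>i\<in>{i \<in> S. infection_time s par X i \<omega> > tau \<omega>}.
                                descendants V s par i)) \<partial>M)
           = (\<Sum>i\<in>S. real (card (descendants V s par i
                 - (\<Union>j\<in>descendants V s par i \<inter> S. descendants V s par j)))
                 * measure M {\<omega> \<in> space M. infection_time s par X i \<omega> > tau \<omega>})
       \<and> (\<integral>\<omega>. real (card (\<Union>i\<in>{i \<in> S. infection_time s par X i \<omega> > tau \<omega>}.
                                descendants V s par i)) \<partial>M)
           = (\<Sum>i\<in>S. (real (card (descendants V s par i))
                 - real (card (\<Union>j\<in>descendants V s par i \<inter> S. descendants V s par j)))
                 * measure M {\<omega> \<in> space M. infection_time s par X i \<omega> > tau \<omega>})"
proof -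
  interpret P: prob_space M by fact
  interpret T: rtree V s par by unfold_locales fact
  note SV = \<open>S \<subseteq> V\<close>
  have finS: "finite S" using SV T.finV finite_subset by blast
  have Xm: "X v \<in> borel_measurable M" if "v \<in> V - {s}" for v
    using distributed_measurable[OF assms(4)[OF that]] by simp
  have taum[measurable]: "tau \<in> borel_measurable M" by fact
  let ?Z = "infection_time s par X"
  have Zm: "(\<lambda>\<omega>. ?Z i \<omega>) \<in> borel_measurable M" if "i \<in> V" for i
    using T.Zmeas[of X M, OF Xm that] by blast
  define E where "E i = {\<omega> \<in> space M. ?Z i \<omega> > tau \<omega>}" for i
  have Es: "E i \<in> sets M" if "i \<in> V" for i
    unfolding E_def using Zm[OF that] taum by measurable
  have Xpos1: "AE \<omega> in M. 0 \<le> X v \<omega>" if v: "v \<in> V - {s}" for v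
  proof -
    have "P.prob {\<omega> \<in> space M. X v \<omega> \<le> 0} = 1 - exp (- 0 * lam)"
      using P.exponential_distributedD_le[OF assms(4)[OF v] _ \<open>0 < lam\<close>, of 0] by simp
    then have "P.prob {\<omega> \<in> space M. X v \<omega> \<le> 0} = 0" by simp
    moreover have "{\<omega> \<in> space M. X v \<omega> \<le> 0} \<in> sets M" using Xm[OF v] by measurable
    ultimately have "{\<omega> \<in> space M. X v \<omega> \<le> 0} \<in> null_sets M"
      by (simp add: P.emeasure_eq_measure null_sets_def)
    from AE_not_in[OF this] AE_space show ?thesis
      by eventually_elim auto
  qed
  have Xpos: "AE \<omega> in M. \<forall>v\<in>V-{s}. 0 \<le> X v \<omega>"
    using T.finV by (intro AE_finite_allI Xpos1) auto
  define f where "f \<omega> = real (card (\<Union>i\<in>{i \<in> S. ?Z i \<omega> > tau \<omega>}. descendants V s par i))" for \<omega>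
  define c where "c i = real (card (T.D S i))" for i
  define g where "g \<omega> = (\<Sum>i\<in>S. c i * indicator (E i) \<omega>)" for \<omega>
  have gm: "g \<in> borel_measurable M" unfolding g_def
    using Es SV by (intro borel_measurable_sum borel_measurable_times borel_measurable_const
       borel_measurable_indicator) auto
  have fm: "f \<in> borel_measurable M"
  proof -
    have eq: "f \<omega> = (\<Sum>k\<in>V. indicator (\<Union>i\<in>{i\<in>S. k \<in> descendants V s par i}. E i) \<omega>)"
      if "\<omega> \<in> space M" for \<omega>
    proof -
      let ?U = "\<Union>i\<in>{i \<in> S. ?Z i \<omega> > tau \<omega>}. descendants V s par i"
      have "?U \<subseteq> V" using T.NsubV by blast
      have "(\<Sum>k\<in>V. indicator (\<Union>i\<in>{i\<in>S. k \<in> descendants V s par i}. E i) \<omega>)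
          = (\<Sum>k\<in>V. indicator ?U k :: real)"
        using that by (intro sum.cong refl) (auto simp: indicator_def E_def)
      also have "\<dots> = real (card (V \<inter> ?U))" using T.finV by (rule sum_ind_card)
      also have "V \<inter> ?U = ?U" using \<open>?U \<subseteq> V\<close> by blast
      finally show ?thesis unfolding f_def by simp
    qed
    have "(\<lambda>\<omega>. \<Sum>k\<in>V. indicator (\<Union>i\<in>{i\<in>S. k \<in> descendants V s par i}. E i) \<omega> :: real)
        \<in> borel_measurable M"
    proof (rule borel_measurable_sum)
      fix k assume "k \<in> V"
      have "(\<Union>i\<in>{i\<in>S. k \<in> descendants V s par i}. E i) \<in> sets M"
        using Es SV finS by (intro sets.finite_UN) auto
      then show "(\<lambda>\<omega>. indicator (\<Union>i\<in>{i\<in>S. k \<in> descendants V s par i}. E i) \<omega> :: real) \<in> borel_measurable M"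
        by (rule borel_measurable_indicator)
    qed
    then show ?thesis by (subst measurable_cong[where f=f, OF eq])
  qed
  have ae: "AE \<omega> in M. f \<omega> = g \<omega>"
    using Xpos AE_space
  proof (eventually_elim)
    case (elim \<omega>)
    let ?T = "{i \<in> S. ?Z i \<omega> > tau \<omega>}"
    have up: "j \<in> ?T" if h: "i \<in> ?T" "j \<in> S" "j \<in> descendants V s par i" for i j
    proof -
      obtain a where a: "j \<in> V" "0 < a" "a \<le> T.d j" "(par ^^ a) j = i"
        using h(3) T.L5 by blast
      have "?Z i \<omega> \<le> ?Z j \<omega>" using T.Zmono[of X \<omega>, OF elim(1) a(1) a(3)] a(4) by simp
      then show ?thesis using h by auto
    qed
    have "f \<omega> = real (\<Sum>i\<in>S. if i \<in> ?T then card (T.D S i) else 0)"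
      unfolding f_def using T.core[OF SV _ up] by auto
    also have "\<dots> = g \<omega>" unfolding g_def of_nat_sum
      by (intro sum.cong refl) (auto simp: c_def E_def indicator_def elim(2)) 
    finally show ?case .
  qed
  have "integral\<^sup>L M f = integral\<^sup>L M g" by (rule integral_cong_AE[OF fm gm ae])
  also have "\<dots> = (\<Sum>i\<in>S. c i * measure M (E i))"
  proof -
    have int: "integrable M (\<lambda>\<omega>. c i * indicator (E i) \<omega>)" if "i \<in> S" for i
    proof -
      have "E i \<in> sets M" using Es SV that by auto
      then show ?thesis
        by (intro integrable_mult_right integrable_real_indicator) (auto simp: less_top P.emeasure_eq_measure)
    qed
    have "integral\<^sup>L M (\<lambda>\<omega>. \<Sum>i\<in>S. c i * indicator (E i) \<omega>)
        = (\<Sum>i\<in>S. integral\<^sup>L M (\<lambda>\<omega>. c i * indicator (E i) \<omega>))"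
      by (rule Bochner_Integration.integral_sum) (rule int)
    moreover have "E i \<inter> space M = E i" for i unfolding E_def by auto
    moreover have "g = (\<lambda>\<omega>. \<Sum>i\<in>S. c i * indicator (E i) \<omega>)" by (simp add: g_def fun_eq_iff)
    ultimately show ?thesis by simp
  qed
  finally have main: "integral\<^sup>L M f = (\<Sum>i\<in>S. c i * measure M (E i))" .
  show ?thesis (is "?A \<and> ?B")
  proof
    show "?A" using main unfolding f_def c_def E_def T.D_def by simp
    show "?B" using main unfolding f_def c_def E_def T.Dcard by simp
  qed
qed

end
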